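(* Fix $M$, the weights $w_1\le\cdots\le w_M$, the speedup function $s$ and the budget $B$. Then there exist coefficients $a_1<a_2<\cdots<a_M$, not depending on the job sizes, such that for every choice of job sizes $x_1\ge x_2\ge\cdots\ge x_M>0$ the optimal value of OPT equals $$J^*=\sum_{i=1}^M a_ix_i.$$
   Context: Setting (problem OPT). There are $M$ jobs, all available at time $0$, with sizes $x_1\ge x_2\ge\cdots\ge x_M>0$ and weights $0<w_1\le w_2\le\cdots\le w_M$. A total resource $B>0$ is shared. The speedup function $s:[0,B]\to[0,\infty)$ satisfies: $s(0)=0$; $s$ is strictly increasing, strictly concave, differentiable, and $s'$ is continuous on $[0,B]$. A schedule consists of functions $\theta_i:(0,\infty)\to[0,B]$, $i=1,\dots,M$, each right-continuous in $t$, with $\sum_{i=1}^M\theta_i(t)\le B$ for all $t>0$. The service received by job $i$ on $[t_1,t_2]$ is $Q_i(t_1,t_2)=\int_{t_1}^{t_2}s(\theta_i(t))\,dt$. The completion time $T_i$ of job $i$ satisfies $Q_i(0,T_i)=x_i$, and $\theta_i(t)=0$ for $t>T_i$. OPT is the problem of choosing a schedule minimizing $J=\sum_{i=1}^M w_iT_i$; $J^*$ denotes its optimal (minimum) value. *)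

theory Defs
  imports "HOL-Analysis.Analysis"
begin

definition speedup_fn :: "(real \<Rightarrow> real) \<Rightarrow> real \<Rightarrow> bool" where
  "speedup_fn s B \<longleftrightarrow>
     s 0 = 0 \<and>
     strict_mono_on {0..B} s \<and>
     (\<forall>u\<in>{0..B}. \<forall>v\<in>{0..B}. \<forall>l::real. u \<noteq> v \<and> 0 < l \<and> l < 1 \<longrightarrow>
        s ((1 - l) * u + l * v) > (1 - l) * s u + l * s v) \<and>
     (\<exists>s'. (\<forall>u\<in>{0..B}. (s has_real_derivative s' u) (at u within {0..B})) \<and>
           continuous_on {0..B} s')"

definition feasible_schedule ::
  "nat \<Rightarrow> real \<Rightarrow> (real \<Rightarrow> real) \<Rightarrow> (nat \<Rightarrow> real) \<Rightarrow>
   (nat \<Rightarrow> real \<Rightarrow> real) \<Rightarrow> (nat \<Rightarrow> real) \<Rightarrow> bool" where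
  "feasible_schedule M B s x \<theta> T \<longleftrightarrow>
     (\<forall>i\<in>{1..M}.
        0 \<le> T i \<and>
        (\<forall>t>0. 0 \<le> \<theta> i t \<and> \<theta> i t \<le> B) \<and>
        (\<forall>t>0. continuous (at_right t) (\<theta> i)) \<and>
        (\<lambda>t. s (\<theta> i t)) integrable_on {0..T i} \<and>
        integral {0..T i} (\<lambda>t. s (\<theta> i t)) = x i \<and>
        (\<forall>t>T i. \<theta> i t = 0)) \<and>
     (\<forall>t>0. (\<Sum>i\<in>{1..M}. \<theta> i t) \<le> B)"

definition OPT_values ::
  "nat \<Rightarrow> real \<Rightarrow> (real \<Rightarrow> real) \<Rightarrow> (nat \<Rightarrow> real) \<Rightarrow> (nat \<Rightarrow> real) \<Rightarrow> real set" where
  "OPT_values M B s w x =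
     {(\<Sum>i\<in>{1..M}. w i * T i) | \<theta> T. feasible_schedule M B s x \<theta> T}"

end

theory Submission
  imports Defs
begin


definition cw :: "(nat \<Rightarrow> real) \<Rightarrow> nat \<Rightarrow> real" where
  "cw w m = (\<Sum>k=1..m. w k)"
definition FS :: "real \<Rightarrow> nat \<Rightarrow> (nat \<Rightarrow> real) set" where
  "FS B m = {\<theta>. (\<forall>k\<in>{1..m}. 0 \<le> \<theta> k) \<and> (\<Sum>k=1..m. \<theta> k) \<le> B}"
definition val :: "(real \<Rightarrow> real) \<Rightarrow> (nat \<Rightarrow> real) \<Rightarrow> nat \<Rightarrow> (nat \<Rightarrow> real) \<Rightarrow> real" where
  "val s b m \<theta> = (\<Sum>k=1..m. b k * s (\<theta> k))"

lemma sp_zero: "speedup_fn s B \<Longrightarrow> s 0 = 0"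
  by (simp add: speedup_fn_def)

lemma sp_cont: "speedup_fn s B \<Longrightarrow> continuous_on {0..B} s"
proof -
  assume "speedup_fn s B"
  then obtain s' where d: "\<forall>u\<in>{0..B}. (s has_real_derivative s' u) (at u within {0..B})"
    unfolding speedup_fn_def by blast
  show ?thesis unfolding continuous_on_eq_continuous_within
    using d DERIV_continuous by blast
qed

lemma sp_less: "speedup_fn s B \<Longrightarrow> 0 \<le> u \<Longrightarrow> u < v \<Longrightarrow> v \<le> B \<Longrightarrow> s u < s v"
  unfolding speedup_fn_def strict_mono_on_def by auto

lemma sp_le: "speedup_fn s B \<Longrightarrow> 0 \<le> u \<Longrightarrow> u \<le> v \<Longrightarrow> v \<le> B \<Longrightarrow> s u \<le> s v"
  using sp_less[of s B u v] by (cases "u = v") auto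

lemma sp_nonneg: "speedup_fn s B \<Longrightarrow> 0 \<le> u \<Longrightarrow> u \<le> B \<Longrightarrow> 0 \<le> s u"
  using sp_le[of s B 0 u] sp_zero[of s B] by auto

lemma sp_pos: "speedup_fn s B \<Longrightarrow> 0 < u \<Longrightarrow> u \<le> B \<Longrightarrow> 0 < s u"
  using sp_less[of s B 0 u] sp_zero[of s B] by auto

lemma sp_conc_strict: "speedup_fn s B \<Longrightarrow> u \<in> {0..B} \<Longrightarrow> v \<in> {0..B} \<Longrightarrow> u \<noteq> v \<Longrightarrow> 0 < l \<Longrightarrow> l < 1
   \<Longrightarrow> s ((1 - l) * u + l * v) > (1 - l) * s u + l * s v"
  unfolding speedup_fn_def by blast

lemma sp_conc: "speedup_fn s B \<Longrightarrow> u \<in> {0..B} \<Longrightarrow> v \<in> {0..B} \<Longrightarrow> 0 \<le> l \<Longrightarrow> l \<le> 1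
   \<Longrightarrow> s ((1 - l) * u + l * v) \<ge> (1 - l) * s u + l * s v"
proof -
  assume a: "speedup_fn s B" "u \<in> {0..B}" "v \<in> {0..B}" "0 \<le> l" "l \<le> 1"
  show ?thesis
  proof (cases "u = v \<or> l = 0 \<or> l = 1")
    case True
    then show ?thesis
      by (auto simp: algebra_simps)
  next
    case False
    then show ?thesis using sp_conc_strict[OF a(1-3), of l] a by auto
  qed
qed

lemma exists_max:
  assumes "B \<ge> 0" "continuous_on {0..B} s"
  shows "\<exists>\<theta>\<in>FS B m. \<forall>\<phi>\<in>FS B m. val s b m \<phi> \<le> val s b m \<theta>"
proof -
  define S where "S = (\<lambda>k::nat. if k \<in> {1..m} then {0..B} else {0::real})"
  define K where "K = PiE UNIV S \<inter> {\<theta>. (\<Sum>k=1..m. \<theta> k) \<le> B}"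
  have c1: "compactin (product_topology (\<lambda>_. euclidean) UNIV) (PiE UNIV S)"
    unfolding compactin_PiE S_def by auto
  hence "compact (PiE UNIV S)"
    by (simp add: euclidean_product_topology)
  moreover have "closed {\<theta>::nat\<Rightarrow>real. (\<Sum>k=1..m. \<theta> k) \<le> B}"
    by (intro closed_Collect_le continuous_on_sum continuous_on_const continuous_on_product_coordinates)
  ultimately have cK: "compact K" unfolding K_def by (rule compact_Int_closed)
  have ne: "(\<lambda>_. 0) \<in> K" unfolding K_def S_def using assms by auto
  have cont: "continuous_on K (val s b m)"
    unfolding val_def
  proof (intro continuous_on_sum continuous_on_mult_left)
    fix k assume k: "k \<in> {1..m}"
    have "continuous_on K (\<lambda>\<theta>. \<theta> k)"
      by (rule continuous_on_subset[OF continuous_on_product_coordinates]) auto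
    moreover have "(\<lambda>\<theta>. \<theta> k) ` K \<subseteq> {0..B}" proof (rule image_subsetI)
      fix x assume "x \<in> K"
      then have "x k \<in> S k" unfolding K_def by (auto simp: PiE_iff)
      then show "x k \<in> {0..B}" using k unfolding S_def by simp
    qed
    ultimately show "continuous_on K (\<lambda>\<theta>. s (\<theta> k))"
      using continuous_on_compose2[OF assms(2)] by blast
  qed
  obtain \<theta> where th: "\<theta> \<in> K" "\<forall>y\<in>K. val s b m y \<le> val s b m \<theta>"
    using continuous_attains_sup[OF cK _ cont] ne by blast
  have "\<theta> \<in> FS B m" unfolding FS_def
  proof (intro CollectI conjI ballI)
    fix k assume k: "k \<in> {1..m}"
    have "\<theta> k \<in> S k" using th(1) unfolding K_def by (auto simp: PiE_iff)
    then show "0 \<le> \<theta> k" using k unfolding S_def by simp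
  next
    show "(\<Sum>k=1..m. \<theta> k) \<le> B" using th(1) unfolding K_def by auto
  qed
  moreover have "val s b m \<phi> \<le> val s b m \<theta>" if "\<phi> \<in> FS B m" for \<phi>
  proof -
    define \<phi>' where "\<phi>' = (\<lambda>k. if k \<in> {1..m} then \<phi> k else 0)"
    have le: "\<phi> k \<le> B" if "k \<in> {1..m}" for k
    proof -
      have "\<phi> k \<le> (\<Sum>k=1..m. \<phi> k)"
        by (rule member_le_sum) (use that \<open>\<phi> \<in> FS B m\<close> in \<open>auto simp: FS_def\<close>)
      thus ?thesis using \<open>\<phi> \<in> FS B m\<close> by (auto simp: FS_def)
    qed
    have "\<phi>' \<in> K" unfolding K_def S_def \<phi>'_def using le \<open>\<phi> \<in> FS B m\<close>
      by (auto simp: FS_def PiE_iff)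
    hence "val s b m \<phi>' \<le> val s b m \<theta>" using th by blast
    moreover have "val s b m \<phi>' = val s b m \<phi>" unfolding val_def \<phi>'_def
      by (rule sum.cong) auto
    ultimately show ?thesis by simp
  qed
  ultimately show ?thesis by blast
qed



definition Inv where
  "Inv s B w b m \<longleftrightarrow> b 0 = 0 \<and> (\<forall>i j. i < j \<and> j \<le> m \<longrightarrow> b i < b j) \<and>
     (\<forall>j\<le>m. (\<forall>\<theta>\<in>FS B j. val s b j \<theta> \<le> cw w j) \<and> (\<exists>\<theta>\<in>FS B j. val s b j \<theta> = cw w j))"

lemma val_Suc: "val s b (Suc n) \<theta> = val s b n \<theta> + b (Suc n) * s (\<theta> (Suc n))"
  by (simp add: val_def)
lemma cw_Suc: "cw w (Suc n) = cw w n + w (Suc n)"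
  by (simp add: cw_def)
lemma sumth_Suc: "(\<Sum>k=1..Suc n. \<theta> k) = (\<Sum>k=1..n. (\<theta> k::real)) + \<theta> (Suc n)"
  by simp

lemma FS_bounds: "\<theta> \<in> FS B m \<Longrightarrow> k \<in> {1..m} \<Longrightarrow> 0 \<le> \<theta> k \<and> \<theta> k \<le> B"
proof -
  assume a: "\<theta> \<in> FS B m" "k \<in> {1..m}"
  have "\<theta> k \<le> (\<Sum>k=1..m. \<theta> k)"
    by (rule member_le_sum) (use a in \<open>auto simp: FS_def\<close>)
  thus ?thesis using a by (auto simp: FS_def)
qed

lemma FS_Suc_down: "\<theta> \<in> FS B (Suc n) \<Longrightarrow> \<theta> \<in> FS B n"
proof -
  assume a: "\<theta> \<in> FS B (Suc n)"
  hence h: "0 \<le> \<theta> (Suc n)" "\<forall>k\<in>{1..Suc n}. 0 \<le> \<theta> k" "(\<Sum>k=1..n. \<theta> k) + \<theta> (Suc n) \<le> B"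
    by (auto simp: FS_def)
  hence "(\<Sum>k=1..n. \<theta> k) \<le> B" by linarith
  thus ?thesis using h(2) unfolding FS_def by auto
qed

lemma val_cong: "(\<And>k. k \<in> {1..m} \<Longrightarrow> b k = b' k) \<Longrightarrow> (\<And>k. k \<in> {1..m} \<Longrightarrow> \<theta> k = \<theta>' k)
   \<Longrightarrow> val s b m \<theta> = val s b' m \<theta>'"
  unfolding val_def by (rule sum.cong) auto

lemma sum_upd:
  fixes g :: "'a \<Rightarrow> 'b \<Rightarrow> real"
  assumes "finite A" "j \<in> A"
  shows "(\<Sum>k\<in>A. g k ((f(j:=v)) k)) = (\<Sum>k\<in>A. g k (f k)) - g j (f j) + g j v"
proof -
  have "(\<Sum>k\<in>A. g k ((f(j:=v)) k)) = g j v + (\<Sum>k\<in>A-{j}. g k ((f(j:=v)) k))"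
    using sum.remove[OF assms, of "\<lambda>k. g k ((f(j:=v)) k)"] by simp
  also have "(\<Sum>k\<in>A-{j}. g k ((f(j:=v)) k)) = (\<Sum>k\<in>A-{j}. g k (f k))"
    by (rule sum.cong) auto
  also have "\<dots> = (\<Sum>k\<in>A. g k (f k)) - g j (f j)"
    using sum.remove[OF assms, of "\<lambda>k. g k (f k)"] by simp
  finally show ?thesis by simp
qed

lemma sum_swap2:
  fixes g :: "'a \<Rightarrow> 'b \<Rightarrow> real"
  assumes "finite A" "i \<in> A" "j \<in> A" "i \<noteq> j"
  shows "(\<Sum>k\<in>A. g k ((f(i:=f j, j:=f i)) k)) = (\<Sum>k\<in>A. g k (f k)) - g i (f i) - g j (f j) + g i (f j) + g j (f i)"
proof -
  have "(\<Sum>k\<in>A. g k ((f(i:=f j, j:=f i)) k)) = (\<Sum>k\<in>A. g k ((f(i:=f j)) k)) - g j ((f(i:=f j)) j) + g j (f i)"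
    by (rule sum_upd[OF assms(1,3)])
  moreover have "(\<Sum>k\<in>A. g k ((f(i:=f j)) k)) = (\<Sum>k\<in>A. g k (f k)) - g i (f i) + g i (f j)"
    by (rule sum_upd[OF assms(1,2)])
  moreover have "(f(i:=f j)) j = f j" using assms(4) by simp
  ultimately show ?thesis by simp
qed

lemma full_budget:
  assumes sp: "speedup_fn s B" and j: "1 \<le> j" and bpos: "\<forall>k\<in>{1..j}. 0 < b k"
    and th: "\<theta> \<in> FS B j" and mx: "\<forall>\<phi>\<in>FS B j. val s b j \<phi> \<le> val s b j \<theta>"
  shows "(\<Sum>k=1..j. \<theta> k) = B"
proof (rule ccontr)
  assume ne: "(\<Sum>k=1..j. \<theta> k) \<noteq> B"
  define S where "S = (\<Sum>k=1..j. \<theta> k)"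
  have SB: "S < B" using ne th unfolding S_def FS_def by auto
  define \<phi> where "\<phi> = \<theta>(j := \<theta> j + (B - S))"
  have jin: "j \<in> {1..j}" using j by auto
  have tj: "\<theta> j \<le> S" unfolding S_def
    by (rule member_le_sum) (use th j in \<open>auto simp: FS_def\<close>)
  have tj0: "0 \<le> \<theta> j" using FS_bounds[OF th jin] by simp
  have sphi: "(\<Sum>k=1..j. \<phi> k) = B"
    unfolding \<phi>_def using sum_upd[of "{1..j}" j "\<lambda>k x. x" \<theta> "\<theta> j + (B - S)"] jin
    unfolding S_def by simp
  have "\<phi> \<in> FS B j" unfolding FS_def
    using sphi th tj0 SB unfolding \<phi>_def FS_def by auto
  hence le: "val s b j \<phi> \<le> val s b j \<theta>" using mx by blast
  have "val s b j \<phi> = val s b j \<theta> - b j * s (\<theta> j) + b j * s (\<theta> j + (B - S))"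
    unfolding val_def \<phi>_def
    using sum_upd[of "{1..j}" j "\<lambda>k x. b k * s x" \<theta> "\<theta> j + (B - S)"] jin by simp
  moreover have "s (\<theta> j) < s (\<theta> j + (B - S))"
    using sp_less[OF sp tj0, of "\<theta> j + (B - S)"] SB tj by auto
  moreover have "0 < b j" using bpos jin by blast
  ultimately have "val s b j \<phi> > val s b j \<theta>" by simp
  thus False using le by simp
qed

lemma max_sorted:
  assumes sp: "speedup_fn s B" and bm: "\<forall>i j. 1 \<le> i \<and> i < j \<and> j \<le> m \<longrightarrow> b i < b j"
    and th: "\<theta> \<in> FS B m" and mx: "\<forall>\<phi>\<in>FS B m. val s b m \<phi> \<le> val s b m \<theta>"
    and ij: "1 \<le> i" "i < j" "j \<le> m"
  shows "\<theta> i \<le> \<theta> j"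
proof (rule ccontr)
  assume "\<not> \<theta> i \<le> \<theta> j"
  hence lt: "\<theta> j < \<theta> i" by simp
  have iin: "i \<in> {1..m}" and jin: "j \<in> {1..m}" using ij by auto
  have ne: "i \<noteq> j" using ij by simp
  define \<phi> where "\<phi> = \<theta>(i := \<theta> j, j := \<theta> i)"
  have "(\<Sum>k=1..m. \<phi> k) = (\<Sum>k=1..m. \<theta> k)"
    unfolding \<phi>_def using sum_swap2[of "{1..m}" i j "\<lambda>k x. x" \<theta>] iin jin ne by simp
  moreover have "\<forall>k\<in>{1..m}. 0 \<le> \<phi> k" unfolding \<phi>_def using th iin jin by (auto simp: FS_def)
  ultimately have "\<phi> \<in> FS B m" using th by (auto simp: FS_def)
  hence le: "val s b m \<phi> \<le> val s b m \<theta>" using mx by blast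
  have "val s b m \<phi> = val s b m \<theta> - b i * s (\<theta> i) - b j * s (\<theta> j) + b i * s (\<theta> j) + b j * s (\<theta> i)"
    unfolding val_def \<phi>_def using sum_swap2[of "{1..m}" i j "\<lambda>k x. b k * s x" \<theta>] iin jin ne by simp
  moreover have "s (\<theta> j) < s (\<theta> i)"
    using sp_less[OF sp _ lt] FS_bounds[OF th iin] FS_bounds[OF th jin] by auto
  moreover have "b i < b j" using bm ij by blast
  ultimately have "val s b m \<phi> - val s b m \<theta> = (b j - b i) * (s (\<theta> i) - s (\<theta> j))"
    by (simp add: algebra_simps)
  also have "\<dots> > 0" using \<open>s (\<theta> j) < s (\<theta> i)\<close> \<open>b i < b j\<close> by simp
  finally show False using le by simp
qed

lemma gap:
  assumes sp: "speedup_fn s B" and u: "u \<in> {0..B}" and v: "v \<in> {0..B}" and t: "0 \<le> t" "t \<le> 1"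
  shows "s u + s v \<le> s ((1 - t) * u + t * v) + s (t * u + (1 - t) * v)"
    and "0 < t \<Longrightarrow> t < 1 \<Longrightarrow> u \<noteq> v \<Longrightarrow> s u + s v < s ((1 - t) * u + t * v) + s (t * u + (1 - t) * v)"
proof -
  have e: "t * u + (1 - t) * v = (1 - t) * v + t * u" by simp
  show "s u + s v \<le> s ((1 - t) * u + t * v) + s (t * u + (1 - t) * v)"
    using sp_conc[OF sp u v t] sp_conc[OF sp v u t] unfolding e by (simp add: algebra_simps)
  assume "0 < t" "t < 1" "u \<noteq> v"
  then show "s u + s v < s ((1 - t) * u + t * v) + s (t * u + (1 - t) * v)"
    using sp_conc_strict[OF sp u v, of t] sp_conc[OF sp v u t] unfolding e by (simp add: algebra_simps)
qed



lemma strict_lvl: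
  assumes sp: "speedup_fn s B" and B: "0 < B" and inv: "Inv s B w b m"
    and wpos: "\<forall>k\<in>{1..Suc m}. 0 < w k" and wmono: "1 \<le> m \<longrightarrow> w m \<le> w (Suc m)"
    and th: "\<theta> \<in> FS B (Suc m)"
  shows "val s (b(Suc m := b m)) (Suc m) \<theta> < cw w (Suc m)"
proof (cases m)
  case 0
  have "val s (b(Suc m := b m)) (Suc m) \<theta> = 0"
    using inv 0 by (simp add: val_def Inv_def)
  moreover have "cw w (Suc m) = w 1" using 0 by (simp add: cw_def)
  ultimately show ?thesis using wpos by auto
next
  case (Suc p)
  define n where "n = Suc p"
  have mn: "m = n" using Suc n_def by simp
  have b0: "b 0 = 0" and bmono: "\<forall>i j. i < j \<and> j \<le> n \<longrightarrow> b i < b j"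
    and lvl: "\<forall>j\<le>n. (\<forall>\<theta>\<in>FS B j. val s b j \<theta> \<le> cw w j) \<and> (\<exists>\<theta>\<in>FS B j. val s b j \<theta> = cw w j)"
    using inv mn unfolding Inv_def by auto
  have bpos: "\<forall>k\<in>{1..n}. 0 < b k" using bmono b0 by (metis atLeastAtMost_iff less_le_trans zero_less_one)
  have "p \<le> n" using n_def by simp
  hence "\<exists>\<theta>\<in>FS B p. val s b p \<theta> = cw w p" using lvl by blast
  then obtain \<psi> where psi: "\<psi> \<in> FS B p" "val s b p \<psi> = cw w p" by blast
  define b' where "b' = b(Suc n := b n)"
  define u where "u = \<theta> n"
  define v where "v = \<theta> (Suc n)"
  define St where "St = (\<Sum>k=1..p. \<theta> k)"
  define Sp where "Sp = (\<Sum>k=1..p. \<psi> k)"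
  have th': "\<theta> \<in> FS B (Suc n)" using th mn by simp
  have thsum: "St + u + v \<le> B" using th' unfolding FS_def St_def u_def v_def n_def by simp
  have u0: "0 \<le> u" and v0: "0 \<le> v" using th' unfolding FS_def u_def v_def n_def by auto
  have Sp0: "Sp \<le> B" using psi unfolding FS_def Sp_def by auto
  have St0: "0 \<le> St" unfolding St_def
    by (rule sum_nonneg) (use th' in \<open>auto simp: FS_def n_def\<close>)
  have thk: "\<theta> k \<in> {0..B}" if "k \<in> {1..p}" for k
    using FS_bounds[OF th', of k] that n_def by auto
  have psk: "\<psi> k \<in> {0..B}" if "k \<in> {1..p}" for k
    using FS_bounds[OF psi(1), of k] that by auto
  have V: "val s b' (Suc n) \<theta> = val s b p \<theta> + b n * s u + b n * s v"
  proof -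
    have "val s b' (Suc n) \<theta> = val s b' n \<theta> + b n * s v" unfolding val_Suc b'_def v_def by simp
    moreover have "val s b' n \<theta> = val s b' p \<theta> + b n * s u" unfolding n_def val_Suc b'_def u_def by simp
    moreover have "val s b' p \<theta> = val s b p \<theta>" by (rule val_cong) (auto simp: b'_def n_def)
    ultimately show ?thesis by simp
  qed
  define t where "t = (if Sp + u \<le> B then 1 else (B - St - u) / (Sp - St))"
  have t01: "0 \<le> t \<and> t \<le> 1"
  proof (cases "Sp + u \<le> B")
    case True then show ?thesis by (simp add: t_def)
  next
    case False
    hence "St < Sp" using thsum v0 by linarith
    then show ?thesis using False thsum v0 by (simp add: t_def divide_simps)
  qed
  define X where "X = (\<lambda>k. if k \<le> p then (1 - t) * \<theta> k + t * \<psi> k else \<theta> k)"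
  define Y where "Y = (\<lambda>k. if k \<le> p then t * \<theta> k + (1 - t) * \<psi> k else \<theta> (Suc n))"
  have sX: "(\<Sum>k=1..p. X k) = (1 - t) * St + t * Sp"
  proof -
    have "(\<Sum>k=1..p. X k) = (\<Sum>k=1..p. (1 - t) * \<theta> k + t * \<psi> k)" by (rule sum.cong) (auto simp: X_def)
    thus ?thesis by (simp add: sum.distrib sum_distrib_left St_def Sp_def)
  qed
  have sY: "(\<Sum>k=1..p. Y k) = t * St + (1 - t) * Sp"
  proof -
    have "(\<Sum>k=1..p. Y k) = (\<Sum>k=1..p. t * \<theta> k + (1 - t) * \<psi> k)" by (rule sum.cong) (auto simp: Y_def)
    thus ?thesis by (simp add: sum.distrib sum_distrib_left St_def Sp_def)
  qed
  have Xn: "X n = u" unfolding X_def u_def n_def by simp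
  have Yn: "Y n = v" unfolding Y_def v_def n_def by simp
  have Xk: "X k \<in> {0..B}" and Yk: "Y k \<in> {0..B}" if "k \<in> {1..p}" for k
  proof -
    have a: "0 \<le> \<theta> k" "\<theta> k \<le> B" "0 \<le> \<psi> k" "\<psi> k \<le> B" using thk[OF that] psk[OF that] by auto
    have "(1 - t) * \<theta> k + t * \<psi> k \<le> (1 - t) * B + t * B"
      using t01 a by (intro add_mono mult_left_mono) auto
    moreover have "t * \<theta> k + (1 - t) * \<psi> k \<le> t * B + (1 - t) * B"
      using t01 a by (intro add_mono mult_left_mono) auto
    moreover have "0 \<le> (1 - t) * \<theta> k + t * \<psi> k" "0 \<le> t * \<theta> k + (1 - t) * \<psi> k"
      using t01 a by auto
    ultimately show "X k \<in> {0..B}" "Y k \<in> {0..B}" using that t01 by (auto simp: X_def Y_def algebra_simps)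
  qed
  have sXY: "(1 - t) * St + t * Sp + u \<le> B \<and> t * St + (1 - t) * Sp + v \<le> B"
  proof (cases "Sp + u \<le> B")
    case True then show ?thesis using thsum u0 by (simp add: t_def)
  next
    case False
    hence lt: "St < Sp" using thsum v0 by linarith
    hence "(1 - t) * St + t * Sp = St + t * (Sp - St)" by (simp add: algebra_simps)
    also have "t * (Sp - St) = B - St - u" using False lt by (simp add: t_def)
    finally have e: "(1 - t) * St + t * Sp = B - u" by simp
    moreover have "t * St + (1 - t) * Sp = St + Sp - ((1 - t) * St + t * Sp)" by (simp add: algebra_simps)
    ultimately show ?thesis using thsum Sp0 by linarith
  qed
  have XF: "X \<in> FS B n"
    unfolding FS_def n_def using sX sXY Xk u0 Xn n_def by (auto simp: le_Suc_eq)
  have YF: "Y \<in> FS B n"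
    unfolding FS_def n_def using sY sXY Yk v0 Yn n_def by (auto simp: le_Suc_eq)
  have valX: "val s b n X = (\<Sum>k=1..p. b k * s (X k)) + b n * s u"
    unfolding n_def val_Suc using Xn n_def by (simp add: val_def)
  have valY: "val s b n Y = (\<Sum>k=1..p. b k * s (Y k)) + b n * s v"
    unfolding n_def val_Suc using Yn n_def by (simp add: val_def)
  define G where "G = (\<Sum>k=1..p. b k * (s (X k) + s (Y k) - s (\<theta> k) - s (\<psi> k)))"
  have gk: "0 \<le> s (X k) + s (Y k) - s (\<theta> k) - s (\<psi> k)" if "k \<in> {1..p}" for k
    using gap(1)[OF sp thk[OF that] psk[OF that], of t] t01 that by (auto simp: X_def Y_def)
  have bposp: "0 \<le> b k" if "k \<in> {1..p}" for k
  proof -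
    have "k \<in> {1..n}" using that n_def by auto
    thus ?thesis using bpos by (meson less_imp_le)
  qed
  have G0: "0 \<le> G" unfolding G_def
    using gk bposp by (intro sum_nonneg mult_nonneg_nonneg) auto
  have sumXY: "val s b n X + val s b n Y = val s b' (Suc n) \<theta> + cw w p + G"
  proof -
    have "G = (\<Sum>k=1..p. b k * s (X k)) + (\<Sum>k=1..p. b k * s (Y k)) - val s b p \<theta> - val s b p \<psi>"
      unfolding G_def val_def by (simp add: sum.distrib sum_subtractf algebra_simps)
    thus ?thesis using valX valY V psi(2) by simp
  qed
  have lX: "val s b n X \<le> cw w n" and lY: "val s b n Y \<le> cw w n" using lvl XF YF by auto
  have cwn: "cw w (Suc n) = cw w n + w (Suc n)" "cw w n = cw w p + w n"
    using cw_Suc n_def by auto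
  have wle: "w n \<le> w (Suc n)" using wmono mn n_def by simp
  have wsn: "0 < w (Suc n)" using wpos mn by simp
  show ?thesis
  proof (rule ccontr)
    assume "\<not> ?thesis"
    hence ge: "cw w (Suc n) \<le> val s b' (Suc n) \<theta>" using mn b'_def by simp
    have G00: "G = 0" using sumXY lX lY ge cwn wle G0 by linarith
    have eX: "val s b n X = cw w n" and eY: "val s b n Y = cw w n"
      using sumXY lX lY ge cwn wle G0 by linarith+
    have maxi: "\<forall>\<phi>\<in>FS B n. val s b n \<phi> \<le> cw w n" using lvl by auto
    show False
    proof (cases "Sp + u \<le> B")
      case True
      hence t1: "t = 1" by (simp add: t_def)
      have "Y k = \<theta> k" if "k \<in> {1..p}" for k using that t1 by (simp add: Y_def)
      have fb: "(\<Sum>k=1..n. Y k) = B"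
        using full_budget[OF sp _ bpos YF] maxi eY n_def by auto
      hence "t * St + (1 - t) * Sp + v = B" using sY Yn n_def by simp
      hence "u = 0" using t1 thsum u0 by simp
      hence "val s b' (Suc n) \<theta> = val s b n Y"
        using V valY \<open>\<And>k. k \<in> {1..p} \<Longrightarrow> Y k = \<theta> k\<close> sp_zero[OF sp]
        by (simp add: val_def)
      thus False using ge eY cwn wsn by simp
    next
      case False
      hence tl1: "t < 1"
      proof -
        have lt: "St < Sp" using False thsum v0 by linarith
        have "B - St - u < Sp - St" using False by simp
        thus ?thesis using False lt by (simp add: t_def divide_simps)
      qed
      have Xt: "X k = \<theta> k" if k: "k \<in> {1..p}" for k
      proof (cases "t = 0")
        case True then show ?thesis using k by (simp add: X_def)
      next
        case False
        hence t0: "0 < t" using t01 by simp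
        have "\<forall>k\<in>{1..p}. b k * (s (X k) + s (Y k) - s (\<theta> k) - s (\<psi> k)) = 0"
          using G00 unfolding G_def
          by (subst sum_nonneg_eq_0_iff[symmetric]) (use gk bposp in \<open>auto intro!: mult_nonneg_nonneg\<close>)
        hence "b k * (s (X k) + s (Y k) - s (\<theta> k) - s (\<psi> k)) = 0" using k by blast
        moreover have "0 < b k" using k bpos n_def by auto
        ultimately have "s (X k) + s (Y k) - s (\<theta> k) - s (\<psi> k) = 0" by simp
        hence "\<theta> k = \<psi> k"
          using gap(2)[OF sp thk[OF k] psk[OF k] _ _ t0 tl1] t01 k by (force simp: X_def Y_def)
        then show ?thesis using k by (simp add: X_def algebra_simps)
      qed
      have "val s b n \<theta> = val s b n X"
        by (rule val_cong) (use Xt Xn n_def u_def in \<open>auto simp: le_Suc_eq\<close>)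
      hence vt: "val s b n \<theta> = cw w n" using eX by simp
      have thn: "\<theta> \<in> FS B n" using FS_Suc_down[OF th'] .
      have "(\<Sum>k=1..n. \<theta> k) = B"
        using full_budget[OF sp _ bpos thn] maxi vt n_def by auto
      hence "St + u = B" unfolding St_def u_def n_def by simp
      hence "v = 0" using thsum v0 by simp
      have "val s b n \<theta> = val s b p \<theta> + b n * s u" unfolding n_def val_Suc u_def by simp
      hence "val s b' (Suc n) \<theta> = cw w n" using V vt \<open>v = 0\<close> sp_zero[OF sp] by simp
      thus False using ge cwn wsn by simp
    qed
  qed
qed



lemma step_lvl:
  assumes sp: "speedup_fn s B" and B: "0 < B" and inv: "Inv s B w b m"
    and wpos: "\<forall>k\<in>{1..Suc m}. 0 < w k" and wmono: "1 \<le> m \<longrightarrow> w m \<le> w (Suc m)"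
  shows "\<exists>\<alpha> > b m. Inv s B w (b(Suc m := \<alpha>)) (Suc m)"
proof -
  define bb where "bb = (\<lambda>\<alpha>. b(Suc m := \<alpha>))"
  have vsplit: "val s (bb \<alpha>) (Suc m) \<phi> = val s b m \<phi> + \<alpha> * s (\<phi> (Suc m))" for \<alpha> \<phi>
  proof -
    have "val s (bb \<alpha>) m \<phi> = val s b m \<phi>" by (rule val_cong) (auto simp: bb_def)
    thus ?thesis unfolding val_Suc by (simp add: bb_def)
  qed
  have sc: "continuous_on {0..B} s" using sp_cont[OF sp] .
  have "\<forall>\<alpha>. \<exists>\<theta>. \<theta> \<in> FS B (Suc m) \<and> (\<forall>\<phi>\<in>FS B (Suc m). val s (bb \<alpha>) (Suc m) \<phi> \<le> val s (bb \<alpha>) (Suc m) \<theta>)"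
    using exists_max[OF _ sc] B by (metis less_imp_le)
  then obtain \<Theta> where Th: "\<And>\<alpha>. \<Theta> \<alpha> \<in> FS B (Suc m)"
    "\<And>\<alpha> \<phi>. \<phi> \<in> FS B (Suc m) \<Longrightarrow> val s (bb \<alpha>) (Suc m) \<phi> \<le> val s (bb \<alpha>) (Suc m) (\<Theta> \<alpha>)"
    by metis
  define G where "G = (\<lambda>\<alpha>. val s (bb \<alpha>) (Suc m) (\<Theta> \<alpha>))"
  have sB: "0 < s B" using sp_pos[OF sp B] by simp
  have sbd: "0 \<le> s (\<phi> (Suc m)) \<and> s (\<phi> (Suc m)) \<le> s B" if "\<phi> \<in> FS B (Suc m)" for \<phi>
    using FS_bounds[OF that, of "Suc m"] sp_nonneg[OF sp] sp_le[OF sp] by auto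
  have lip1: "G \<alpha> - G \<beta> \<le> \<bar>\<alpha> - \<beta>\<bar> * s B" for \<alpha> \<beta>
  proof -
    have "G \<beta> \<ge> val s (bb \<beta>) (Suc m) (\<Theta> \<alpha>)" unfolding G_def by (rule Th(2)[OF Th(1)])
    hence "G \<alpha> - G \<beta> \<le> (\<alpha> - \<beta>) * s (\<Theta> \<alpha> (Suc m))" unfolding G_def vsplit by (simp add: algebra_simps)
    also have "\<dots> \<le> \<bar>\<alpha> - \<beta>\<bar> * s (\<Theta> \<alpha> (Suc m))"
      using sbd[OF Th(1)] by (intro mult_right_mono) auto
    also have "\<dots> \<le> \<bar>\<alpha> - \<beta>\<bar> * s B"
      using sbd[OF Th(1)] by (intro mult_left_mono) auto
    finally show ?thesis .
  qed
  have "(s B)-lipschitz_on UNIV G"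
  proof (rule lipschitz_onI)
    fix x y :: real
    show "dist (G x) (G y) \<le> s B * dist x y"
      using lip1[of x y] lip1[of y x] by (simp add: dist_real_def abs_le_iff abs_minus_commute algebra_simps)
  qed (use sB in auto)
  hence cG: "continuous_on UNIV G" by (rule lipschitz_on_continuous_on)
  have Glo: "G (b m) < cw w (Suc m)"
    unfolding G_def bb_def by (rule strict_lvl[OF sp B inv wpos wmono Th(1)[unfolded bb_def]])
  define hi where "hi = max (b m) (cw w (Suc m) / s B)"
  define \<phi>0 where "\<phi>0 = (\<lambda>k::nat. if k = Suc m then B else 0)"
  have p0: "\<phi>0 \<in> FS B (Suc m)" unfolding FS_def \<phi>0_def using B by simp
  have "val s b m \<phi>0 = 0" unfolding val_def \<phi>0_def using sp_zero[OF sp] by simp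
  hence "val s (bb hi) (Suc m) \<phi>0 = hi * s B" unfolding vsplit by (simp add: \<phi>0_def)
  also have "\<dots> \<ge> cw w (Suc m)"
  proof -
    have "cw w (Suc m) / s B \<le> hi" unfolding hi_def by simp
    thus ?thesis using sB by (simp add: divide_simps)
  qed
  finally have Ghi: "cw w (Suc m) \<le> G hi" unfolding G_def using Th(2)[OF p0, of hi] by linarith
  obtain \<alpha> where al: "b m \<le> \<alpha>" "\<alpha> \<le> hi" "G \<alpha> = cw w (Suc m)"
  proof -
    have "b m \<le> hi" unfolding hi_def by simp
    moreover have "continuous_on {b m..hi} G" using continuous_on_subset[OF cG] by blast
    ultimately show ?thesis using IVT'[of G "b m" "cw w (Suc m)" hi] Glo Ghi that by force
  qed
  have agt: "b m < \<alpha>" using al Glo by (cases "\<alpha> = b m") auto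
  have b0: "b 0 = 0" and bmono: "\<forall>i j. i < j \<and> j \<le> m \<longrightarrow> b i < b j"
    and lvl: "\<forall>j\<le>m. (\<forall>\<theta>\<in>FS B j. val s b j \<theta> \<le> cw w j) \<and> (\<exists>\<theta>\<in>FS B j. val s b j \<theta> = cw w j)"
    using inv unfolding Inv_def by auto
  have "Inv s B w (bb \<alpha>) (Suc m)"
    unfolding Inv_def
  proof (intro conjI)
    show "bb \<alpha> 0 = 0" using b0 by (simp add: bb_def)
  next
   show "\<forall>i j. i < j \<and> j \<le> Suc m \<longrightarrow> bb \<alpha> i < bb \<alpha> j"
   proof (intro allI impI)
    fix i j assume ij: "i < j \<and> j \<le> Suc m"
    show "bb \<alpha> i < bb \<alpha> j"
    proof (cases "j = Suc m")
      case True
      have "b i \<le> b m" using bmono ij True by (cases "i = m") (auto simp: less_imp_le)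
      then show ?thesis using True ij agt by (simp add: bb_def)
    next
      case False
      then show ?thesis using ij bmono by (simp add: bb_def)
    qed
   qed
  next
   show "\<forall>j\<le>Suc m. (\<forall>\<theta>\<in>FS B j. val s (bb \<alpha>) j \<theta> \<le> cw w j) \<and> (\<exists>\<theta>\<in>FS B j. val s (bb \<alpha>) j \<theta> = cw w j)"
   proof (intro allI impI)
    fix j assume j: "j \<le> Suc m"
    show "(\<forall>\<theta>\<in>FS B j. val s (bb \<alpha>) j \<theta> \<le> cw w j) \<and> (\<exists>\<theta>\<in>FS B j. val s (bb \<alpha>) j \<theta> = cw w j)"
    proof (cases "j = Suc m")
      case True
      have "\<forall>\<theta>\<in>FS B j. val s (bb \<alpha>) j \<theta> \<le> cw w j"
        using Th(2)[of _ \<alpha>] al(3) True unfolding G_def by auto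
      then show ?thesis using Th(1)[of \<alpha>] al(3) True unfolding G_def by auto
    next
      case False
      hence jm: "j \<le> m" using j by simp
      have "val s (bb \<alpha>) j \<theta> = val s b j \<theta>" for \<theta>
        by (rule val_cong) (use jm in \<open>auto simp: bb_def\<close>)
      then show ?thesis using lvl jm by simp
    qed
   qed
  qed
  thus ?thesis using agt unfolding bb_def by blast
qed

lemma construct_a:
  assumes sp: "speedup_fn s B" and B: "0 < B"
    and wpos: "\<forall>i\<in>{1..M}. 0 < w i"
    and wmono: "\<forall>i\<in>{1..M}. \<forall>j\<in>{1..M}. i \<le> j \<longrightarrow> w i \<le> w j"
  shows "\<exists>b. Inv s B w b M"
proof -
  have "m \<le> M \<Longrightarrow> \<exists>b. Inv s B w b m" for m
  proof (induction m)
    case 0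
    have "Inv s B w (\<lambda>_. 0) 0"
      unfolding Inv_def using B by (auto simp: FS_def val_def cw_def intro!: exI[of _ "\<lambda>_. 0"])
    then show ?case by blast
  next
    case (Suc m)
    then obtain b where b: "Inv s B w b m" by auto
    have "\<forall>k\<in>{1..Suc m}. 0 < w k" using wpos Suc.prems by auto
    moreover have "1 \<le> m \<longrightarrow> w m \<le> w (Suc m)" using wmono Suc.prems by auto
    ultimately show ?case using step_lvl[OF sp B b] by blast
  qed
  thus ?thesis by simp
qed



lemma subset_sum_ge:
  fixes f :: "nat \<Rightarrow> real"
  assumes mono: "\<forall>i\<in>{1..M}. \<forall>j\<in>{1..M}. i \<le> j \<longrightarrow> f i \<le> f j"
    and S: "S \<subseteq> {1..M}"
  shows "(\<Sum>k=1..card S. f k) \<le> sum f S"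
proof -
  define n where "n = card S"
  have fS: "finite S" using S finite_subset by blast
  have nM: "n \<le> M" unfolding n_def using card_mono[OF _ S] by simp
  define P where "P = {1..n}"
  show ?thesis
  proof (cases "n = 0")
    case True
    then show ?thesis using fS n_def by simp
  next
    case False
    have nI: "n \<in> {1..M}" using False nM by simp
    have e1: "sum f S = sum f (S \<inter> P) + sum f (S - P)" using fS by (rule sum.Int_Diff)
    have e2: "sum f P = sum f (P \<inter> S) + sum f (P - S)" unfolding P_def by (rule sum.Int_Diff) simp
    have c1: "card S = card (S \<inter> P) + card (S - P)" using fS
      by (metis card_Int_Diff)
    have c2: "card P = card (P \<inter> S) + card (P - S)"
      unfolding P_def by (metis card_Int_Diff finite_atLeastAtMost)
    have cP: "card P = n" unfolding P_def by simp
    have ceq: "card (S - P) = card (P - S)" using c1 c2 cP n_def by (simp add: Int_commute)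
    have l1: "real (card (S - P)) * f n \<le> sum f (S - P)"
    proof (rule sum_bounded_below)
      fix k assume "k \<in> S - P"
      hence "k \<in> {1..M}" "n \<le> k" using S unfolding P_def by auto
      thus "f n \<le> f k" using mono nI by blast
    qed
    have l2: "sum f (P - S) \<le> real (card (P - S)) * f n"
    proof (rule sum_bounded_above)
      fix k assume "k \<in> P - S"
      hence "k \<in> {1..M}" "k \<le> n" using nM unfolding P_def by auto
      thus "f k \<le> f n" using mono nI by blast
    qed
    have "sum f P \<le> sum f S"
      using e1 e2 l1 l2 ceq by (simp add: Int_commute)
    thus ?thesis unfolding P_def n_def .
  qed
qed

lemma abel:
  fixes b x :: "nat \<Rightarrow> real"
  shows "(\<Sum>j=1..M. b j * x j) = (\<Sum>n=1..M. (x n - x (Suc n)) * (\<Sum>j=1..n. b j)) + x (Suc M) * (\<Sum>j=1..M. b j)"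
proof (induction M)
  case 0
  then show ?case by simp
next
  case (Suc M)
  then show ?case by (simp add: algebra_simps)
qed

lemma rearr:
  fixes a x :: "nat \<Rightarrow> real"
  assumes amono: "\<forall>i\<in>{1..M}. \<forall>j\<in>{1..M}. i \<le> j \<longrightarrow> a i \<le> a j"
    and xmono: "\<forall>i\<in>{1..M}. \<forall>j\<in>{1..M}. i \<le> j \<longrightarrow> x j \<le> x i"
    and xpos: "\<forall>i\<in>{1..M}. 0 \<le> x i"
    and inj: "inj_on \<pi> {1..M}" and img: "\<pi> ` {1..M} \<subseteq> {1..M}"
  shows "(\<Sum>k=1..M. a k * x k) \<le> (\<Sum>j=1..M. a (\<pi> j) * x j)"
proof -
  define x' where "x' = x(Suc M := 0)"
  have e1: "(\<Sum>k=1..M. a k * x k) = (\<Sum>k=1..M. a k * x' k)" unfolding x'_def by (rule sum.cong) auto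
  have e2: "(\<Sum>j=1..M. a (\<pi> j) * x j) = (\<Sum>j=1..M. a (\<pi> j) * x' j)" unfolding x'_def by (rule sum.cong) auto
  have "(\<Sum>n=1..M. (x' n - x' (Suc n)) * (\<Sum>j=1..n. a j)) \<le> (\<Sum>n=1..M. (x' n - x' (Suc n)) * (\<Sum>j=1..n. a (\<pi> j)))"
  proof (rule sum_mono)
    fix n assume n: "n \<in> {1..M}"
    have d: "0 \<le> x' n - x' (Suc n)"
    proof (cases "n = M")
      case True then show ?thesis using xpos n by (simp add: x'_def)
    next
      case False
      hence "Suc n \<in> {1..M}" using n by auto
      then show ?thesis using xmono n by (auto simp: x'_def)
    qed
    have injn: "inj_on \<pi> {1..n}" by (rule inj_on_subset[OF inj]) (use n in auto)
    have "(\<Sum>j=1..n. a (\<pi> j)) = sum a (\<pi> ` {1..n})" using sum.reindex[OF injn, of a] by (simp add: comp_def)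
    moreover have "card (\<pi> ` {1..n}) = n" using card_image[OF injn] by simp
    moreover have "\<pi> ` {1..n} \<subseteq> {1..M}" using img n by auto
    ultimately have "(\<Sum>j=1..n. a j) \<le> (\<Sum>j=1..n. a (\<pi> j))"
      using subset_sum_ge[OF amono, of "\<pi> ` {1..n}"] by simp
    thus "(x' n - x' (Suc n)) * (\<Sum>j=1..n. a j) \<le> (x' n - x' (Suc n)) * (\<Sum>j=1..n. a (\<pi> j))"
      using d by (intro mult_left_mono)
  qed
  moreover have "x' (Suc M) = 0" by (simp add: x'_def)
  ultimately show ?thesis
    unfolding e1 e2 abel[of a x' M] abel[of "\<lambda>j. a (\<pi> j)" x' M] by simp
qed



definition prec :: "(nat \<Rightarrow> real) \<Rightarrow> nat \<Rightarrow> nat \<Rightarrow> bool" where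
  "prec T j' j \<longleftrightarrow> T j < T j' \<or> (T j' = T j \<and> j' < j)"
definition jrank :: "(nat \<Rightarrow> real) \<Rightarrow> nat \<Rightarrow> nat \<Rightarrow> nat" where
  "jrank T M j = Suc (card {j'\<in>{1..M}. prec T j' j})"

lemma jrank_less:
  assumes "j1 \<in> {1..M}" "prec T j1 j2"
  shows "jrank T M j1 < jrank T M j2"
proof -
  have "insert j1 {j'\<in>{1..M}. prec T j' j1} \<subseteq> {j'\<in>{1..M}. prec T j' j2}"
    using assms unfolding prec_def by auto
  moreover have "j1 \<notin> {j'\<in>{1..M}. prec T j' j1}" unfolding prec_def by auto
  ultimately have "card {j'\<in>{1..M}. prec T j' j1} + 1 \<le> card {j'\<in>{1..M}. prec T j' j2}"
  proof -
    have f: "finite {j'\<in>{1..M}. prec T j' j2}" by simp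
    have "card (insert j1 {j'\<in>{1..M}. prec T j' j1}) \<le> card {j'\<in>{1..M}. prec T j' j2}"
      by (rule card_mono[OF f \<open>insert j1 _ \<subseteq> _\<close>])
    thus ?thesis using \<open>j1 \<notin> _\<close> by simp
  qed
  thus ?thesis unfolding jrank_def by simp
qed

lemma jrank_inj: "inj_on (jrank T M) {1..M}"
proof (rule inj_onI)
  fix j1 j2 assume j: "j1 \<in> {1..M}" "j2 \<in> {1..M}" "jrank T M j1 = jrank T M j2"
  show "j1 = j2"
  proof (rule ccontr)
    assume "j1 \<noteq> j2"
    hence "prec T j1 j2 \<or> prec T j2 j1" unfolding prec_def by auto
    thus False using jrank_less[OF j(1), of T j2] jrank_less[OF j(2), of T j1] j(3) by auto
  qed
qed

lemma jrank_bij: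
  assumes A: "A \<subseteq> {1..M}" and up: "\<forall>j\<in>A. \<forall>j'\<in>{1..M}. T j \<le> T j' \<longrightarrow> j' \<in> A"
  shows "bij_betw (jrank T M) A {1..card A}"
proof -
  have fA: "finite A" using A finite_subset by blast
  have inj: "inj_on (jrank T M) A" using jrank_inj A by (rule inj_on_subset)
  have sub: "jrank T M ` A \<subseteq> {1..card A}"
  proof
    fix r assume "r \<in> jrank T M ` A"
    then obtain j where j: "j \<in> A" "r = jrank T M j" by blast
    have "{j'\<in>{1..M}. prec T j' j} \<subseteq> A - {j}"
      using up j(1) unfolding prec_def by auto
    hence "card {j'\<in>{1..M}. prec T j' j} \<le> card (A - {j})" using fA by (intro card_mono) auto
    also have "\<dots> = card A - 1" using j(1) fA by simp
    finally have "card {j'\<in>{1..M}. prec T j' j} \<le> card A - 1" .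
    moreover have "card A \<ge> 1" using j(1) fA card_gt_0_iff[of A] by force
    ultimately show "r \<in> {1..card A}" unfolding j(2) jrank_def by auto
  qed
  have "card (jrank T M ` A) = card A" using card_image[OF inj] .
  hence "jrank T M ` A = {1..card A}" using sub by (intro card_subset_eq) auto
  thus ?thesis using inj unfolding bij_betw_def by simp
qed



lemma pointwise:
  assumes sp: "speedup_fn s B" and inv: "Inv s B w a M"
    and wmono: "\<forall>i\<in>{1..M}. \<forall>j\<in>{1..M}. i \<le> j \<longrightarrow> w i \<le> w j"
    and th0: "\<forall>j\<in>{1..M}. 0 \<le> \<theta> j t" and thz: "\<forall>j\<in>{1..M}. T j < t \<longrightarrow> \<theta> j t = 0"
    and thB: "(\<Sum>j=1..M. \<theta> j t) \<le> B"
  shows "(\<Sum>j=1..M. a (jrank T M j) * s (\<theta> j t)) \<le> (\<Sum>j=1..M. w j * (if t \<le> T j then 1 else 0))"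
proof -
  define I where "I = {1..M::nat}"
  define A where "A = {j\<in>I. t \<le> T j}"
  define r where "r = jrank T M"
  define m where "m = card A"
  have AI: "A \<subseteq> I" unfolding A_def by auto
  have fI: "finite I" unfolding I_def by simp
  have up: "\<forall>j\<in>A. \<forall>j'\<in>{1..M}. T j \<le> T j' \<longrightarrow> j' \<in> A" unfolding A_def I_def by auto
  have bij: "bij_betw r A {1..m}" unfolding r_def m_def
    by (rule jrank_bij) (use AI up in \<open>auto simp: I_def\<close>)
  have inj: "inj_on r A" using bij bij_betw_imp_inj_on by blast
  have L: "(\<Sum>j\<in>I. a (r j) * s (\<theta> j t)) = (\<Sum>j\<in>A. a (r j) * s (\<theta> j t))"
    by (rule sum.mono_neutral_right[OF fI AI]) (use thz sp_zero[OF sp] in \<open>auto simp: A_def I_def\<close>)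
  have R: "(\<Sum>j\<in>I. w j * (if t \<le> T j then 1 else 0)) = (\<Sum>j\<in>A. w j)"
  proof -
    have "(\<Sum>j\<in>I. w j * (if t \<le> T j then 1 else 0)) = (\<Sum>j\<in>A. w j * (if t \<le> T j then 1 else 0))"
      by (rule sum.mono_neutral_right[OF fI AI]) (auto simp: A_def)
    also have "\<dots> = (\<Sum>j\<in>A. w j)" by (rule sum.cong) (auto simp: A_def)
    finally show ?thesis .
  qed
  define \<phi> where "\<phi> = (\<lambda>k. \<theta> (inv_into A r k) t)"
  have phr: "\<phi> (r j) = \<theta> j t" if "j \<in> A" for j unfolding \<phi>_def using inv_into_f_f[OF inj that] by simp
  have e1: "(\<Sum>j\<in>A. a (r j) * s (\<theta> j t)) = val s a m \<phi>"
  proof -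
    have "(\<Sum>j\<in>A. a (r j) * s (\<theta> j t)) = (\<Sum>j\<in>A. a (r j) * s (\<phi> (r j)))"
      by (rule sum.cong) (auto simp: phr)
    also have "\<dots> = (\<Sum>k\<in>{1..m}. a k * s (\<phi> k))"
      by (rule sum.reindex_bij_betw[OF bij])
    finally show ?thesis unfolding val_def .
  qed
  have e2: "(\<Sum>j\<in>A. \<theta> j t) = (\<Sum>k=1..m. \<phi> k)"
  proof -
    have "(\<Sum>j\<in>A. \<theta> j t) = (\<Sum>j\<in>A. \<phi> (r j))" by (rule sum.cong) (auto simp: phr)
    also have "\<dots> = (\<Sum>k\<in>{1..m}. \<phi> k)" by (rule sum.reindex_bij_betw[OF bij])
    finally show ?thesis .
  qed
  have phF: "\<phi> \<in> FS B m" unfolding FS_def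
  proof (intro CollectI conjI ballI)
    fix k assume k: "k \<in> {1..m}"
    have "inv_into A r k \<in> A" using bij k by (metis bij_betw_def inv_into_into)
    thus "0 \<le> \<phi> k" unfolding \<phi>_def using th0 AI I_def by auto
  next
    have "(\<Sum>j\<in>A. \<theta> j t) \<le> (\<Sum>j\<in>I. \<theta> j t)"
      by (rule sum_mono2[OF fI AI]) (use th0 I_def in auto)
    thus "(\<Sum>k=1..m. \<phi> k) \<le> B" using e2 thB I_def by simp
  qed
  have mM: "m \<le> M" unfolding m_def using card_mono[OF fI AI] I_def by simp
  have "val s a m \<phi> \<le> cw w m" using inv mM phF unfolding Inv_def by blast
  also have "cw w m \<le> (\<Sum>j\<in>A. w j)" unfolding cw_def m_def
    by (rule subset_sum_ge[OF wmono]) (use AI I_def in auto)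
  finally show ?thesis using L R e1 unfolding I_def r_def by simp
qed

lemma lower_bound:
  assumes sp: "speedup_fn s B" and B: "0 < B" and inv: "Inv s B w a M"
    and wpos: "\<forall>i\<in>{1..M}. 0 < w i"
    and wmono: "\<forall>i\<in>{1..M}. \<forall>j\<in>{1..M}. i \<le> j \<longrightarrow> w i \<le> w j"
    and xpos: "\<forall>i\<in>{1..M}. 0 < x i"
    and xmono: "\<forall>i\<in>{1..M}. \<forall>j\<in>{1..M}. i \<le> j \<longrightarrow> x j \<le> x i"
    and fs: "feasible_schedule M B s x \<theta> T"
  shows "(\<Sum>i=1..M. a i * x i) \<le> (\<Sum>i=1..M. w i * T i)"
proof -
  define I where "I = {1..M::nat}"
  have fI: "finite I" unfolding I_def by simp
  define r where "r = jrank T M"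
  have T0: "\<forall>i\<in>I. 0 \<le> T i" and thb: "\<forall>i\<in>I. \<forall>t>0. 0 \<le> \<theta> i t \<and> \<theta> i t \<le> B"
    and intg0: "\<forall>i\<in>I. (\<lambda>t. s (\<theta> i t)) integrable_on {0..T i} \<and> integral {0..T i} (\<lambda>t. s (\<theta> i t)) = x i"
    and thz: "\<forall>i\<in>I. \<forall>t>T i. \<theta> i t = 0"
    and thB: "\<forall>t>0. (\<Sum>i\<in>I. \<theta> i t) \<le> B"
    using fs unfolding feasible_schedule_def I_def by blast+
  have intg: "\<forall>i\<in>I. ((\<lambda>t. s (\<theta> i t)) has_integral x i) {0..T i}"
  proof
    fix i assume "i \<in> I"
    hence "(\<lambda>t. s (\<theta> i t)) integrable_on {0..T i}" "integral {0..T i} (\<lambda>t. s (\<theta> i t)) = x i"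
      using intg0 by auto
    thus "((\<lambda>t. s (\<theta> i t)) has_integral x i) {0..T i}" using integrable_integral by metis
  qed
  have amono: "\<forall>i\<in>I. \<forall>j\<in>I. i \<le> j \<longrightarrow> a i \<le> a j"
  proof (intro ballI impI)
    fix i j assume ij: "i \<in> I" "j \<in> I" "i \<le> j"
    have "\<forall>i j. i < j \<and> j \<le> M \<longrightarrow> a i < a j" using inv unfolding Inv_def by blast
    hence "i < j \<Longrightarrow> a i < a j" using ij unfolding I_def by auto
    thus "a i \<le> a j" using ij(3) by (cases "i = j") auto
  qed
  have A: "(\<Sum>i=1..M. a i * x i) \<le> (\<Sum>j=1..M. a (r j) * x j)"
  proof (rule rearr)
    show "inj_on r {1..M}" unfolding r_def by (rule jrank_inj)
    have "bij_betw r {1..M} {1..card {1..M}}" unfolding r_def by (rule jrank_bij) blast+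
    thus "r ` {1..M} \<subseteq> {1..M}" by (simp add: bij_betw_def)
  next
    show "\<forall>i\<in>{1..M}. \<forall>j\<in>{1..M}. i \<le> j \<longrightarrow> a i \<le> a j" using amono unfolding I_def .
  next
    show "\<forall>i\<in>{1..M}. \<forall>j\<in>{1..M}. i \<le> j \<longrightarrow> x j \<le> x i" using xmono .
  next
    show "\<forall>i\<in>{1..M}. 0 \<le> x i" using xpos by (simp add: less_imp_le)
  qed
  define Tm where "Tm = Max (insert 0 (T ` I))"
  have Tm: "\<forall>i\<in>I. T i \<le> Tm" "0 \<le> Tm" unfolding Tm_def using fI by auto
  have intj: "((\<lambda>t. s (\<theta> j t)) has_integral x j) {0..Tm}" if j: "j \<in> I" for j
  proof -
    have "((\<lambda>t. if t \<in> cbox 0 (T j) then s (\<theta> j t) else 0) has_integral x j) (cbox 0 Tm)"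
    proof (rule has_integral_restrict_closed_subinterval)
      show "((\<lambda>t. s (\<theta> j t)) has_integral x j) (cbox 0 (T j))"
        using intg j unfolding box_real by blast
      show "cbox 0 (T j) \<subseteq> cbox 0 Tm" unfolding box_real using Tm j by auto
    qed
    hence h: "((\<lambda>t. if t \<in> {0..T j} then s (\<theta> j t) else 0) has_integral x j) {0..Tm}"
      unfolding box_real .
    have eq: "(if t \<in> {0..T j} then s (\<theta> j t) else 0) = s (\<theta> j t)" if t: "t \<in> {0..Tm}" for t
    proof (cases "t \<le> T j")
      case True then show ?thesis using t by simp
    next
      case False
      hence "\<theta> j t = 0" using thz j by simp
      then show ?thesis using False sp_zero[OF sp] by simp
    qed
    have "((\<lambda>t. if t \<in> {0..T j} then s (\<theta> j t) else 0) has_integral x j) {0..Tm} =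
          ((\<lambda>t. s (\<theta> j t)) has_integral x j) {0..Tm}"
      by (rule has_integral_cong) (rule eq)
    thus ?thesis using h by simp
  qed
  define F where "F = (\<lambda>t. \<Sum>j\<in>I. a (r j) * s (\<theta> j t))"
  have iF: "(F has_integral (\<Sum>j\<in>I. a (r j) * x j)) {0..Tm}"
    unfolding F_def by (intro has_integral_sum fI has_integral_mult_right intj)
  define F' where "F' = (\<lambda>t. if t = 0 then 0 else F t)"
  have iF': "(F' has_integral (\<Sum>j\<in>I. a (r j) * x j)) {0..Tm}"
    by (rule has_integral_spike_finite[of "{0}" _ _ F]) (use iF in \<open>auto simp: F'_def\<close>)
  define H where "H = (\<lambda>t. \<Sum>j\<in>I. w j * (if t \<le> T j then 1 else 0))"
  have iH: "(H has_integral (\<Sum>j\<in>I. w j * T j)) {0..Tm}"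
    unfolding H_def
  proof (intro has_integral_sum fI has_integral_mult_right)
    fix j assume j: "j \<in> I"
    have "((\<lambda>t. if t \<in> cbox 0 (T j) then 1 else 0) has_integral T j) (cbox 0 Tm)"
    proof (rule has_integral_restrict_closed_subinterval)
      show "((\<lambda>t. 1::real) has_integral T j) (cbox 0 (T j))"
        using has_integral_const_real[of "1::real" 0 "T j"] T0 j unfolding box_real by simp
      show "cbox 0 (T j) \<subseteq> cbox 0 Tm" unfolding box_real using Tm j by auto
    qed
    hence h: "((\<lambda>t. if t \<in> {0..T j} then 1 else 0) has_integral T j) {0..Tm}"
      unfolding box_real .
    have "((\<lambda>t. if t \<in> {0..T j} then 1 else 0) has_integral T j) {0..Tm} =
          ((\<lambda>t. if t \<le> T j then 1 else (0::real)) has_integral T j) {0..Tm}"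
      by (rule has_integral_cong) auto
    thus "((\<lambda>t. if t \<le> T j then 1 else 0) has_integral T j) {0..Tm}" using h by simp
  qed
  have le: "F' t \<le> H t" if "t \<in> {0..Tm}" for t
  proof (cases "t = 0")
    case True
    then show ?thesis unfolding F'_def H_def using wpos I_def
      by (auto intro!: sum_nonneg)
  next
    case False
    hence tp: "0 < t" using that by auto
    have "F t \<le> H t" unfolding F_def H_def I_def r_def
      by (rule pointwise[OF sp inv wmono]) (use thb thz thB tp I_def in auto)
    thus ?thesis using False by (simp add: F'_def)
  qed
  have "(\<Sum>j\<in>I. a (r j) * x j) \<le> (\<Sum>j\<in>I. w j * T j)"
    by (rule has_integral_le[OF iF' iH le])
  thus ?thesis using A unfolding I_def by simp
qed



lemma times_exist:
  fixes x :: "nat \<Rightarrow> real" and \<sigma> :: "nat \<Rightarrow> nat \<Rightarrow> real"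
  assumes xpos: "\<forall>i\<in>{1..M}. 0 < x i"
    and xmono: "\<forall>i\<in>{1..M}. \<forall>j\<in>{1..M}. i \<le> j \<longrightarrow> x j \<le> x i"
    and smono: "\<forall>l\<in>{1..M}. \<forall>k. 1 \<le> k \<and> k < l \<longrightarrow> \<sigma> l k \<le> \<sigma> l (Suc k)"
    and spos: "\<forall>l\<in>{1..M}. 0 < \<sigma> l l"
  shows "\<exists>T. T (Suc M) = 0 \<and> (\<forall>l\<in>{1..M}. T (Suc l) \<le> T l) \<and>
             (\<forall>i\<in>{1..M}. (\<Sum>l=i..M. \<sigma> l i * (T l - T (Suc l))) = x i)"
proof -
  define R where "R = (\<lambda>k T i. x i - (\<Sum>l=Suc k..M. \<sigma> l i * (T l - T (Suc l))))"
  define P where "P = (\<lambda>k. \<exists>T. T (Suc M) = 0 \<and> (\<forall>l. k < l \<and> l \<le> M \<longrightarrow> T (Suc l) \<le> T l) \<and>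
      (\<forall>i. k < i \<and> i \<le> M \<longrightarrow> (\<Sum>l=i..M. \<sigma> l i * (T l - T (Suc l))) = x i) \<and>
      (\<forall>i. 1 \<le> i \<and> i < k \<longrightarrow> R k T (Suc i) \<le> R k T i) \<and> (1 \<le> k \<longrightarrow> 0 \<le> R k T k))"
  have "P 0"
  proof (rule inc_induct[of 0 M P])
    show "0 \<le> M" by simp
  next
    have "\<And>i. R M (\<lambda>_. 0) i = x i" unfolding R_def by simp
    moreover have "R M (\<lambda>_. 0) (Suc i) \<le> R M (\<lambda>_. 0) i" if "1 \<le> i" "i < M" for i
      using xmono that calculation by auto
    moreover have "1 \<le> M \<longrightarrow> 0 \<le> R M (\<lambda>_. 0) M" using xpos calculation by (auto simp: less_imp_le)
    ultimately show "P M" unfolding P_def by (intro exI[of _ "\<lambda>_. 0"]) auto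
  next
    fix n assume n: "0 \<le> n" "n < M" and IH: "P (Suc n)"
    define k where "k = Suc n"
    have kM: "1 \<le> k" "k \<le> M" using n k_def by auto
    obtain T where T: "T (Suc M) = 0" "\<forall>l. k < l \<and> l \<le> M \<longrightarrow> T (Suc l) \<le> T l"
      "\<forall>i. k < i \<and> i \<le> M \<longrightarrow> (\<Sum>l=i..M. \<sigma> l i * (T l - T (Suc l))) = x i"
      "\<forall>i. 1 \<le> i \<and> i < k \<longrightarrow> R k T (Suc i) \<le> R k T i" "0 \<le> R k T k"
      using IH kM unfolding P_def k_def by auto
    have skk: "0 < \<sigma> k k" using spos kM by auto
    define \<tau> where "\<tau> = R k T k / \<sigma> k k"
    have tau0: "0 \<le> \<tau>" unfolding \<tau>_def using T(5) skk by simp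
    have stau: "\<sigma> k k * \<tau> = R k T k" unfolding \<tau>_def using skk by simp
    define T' where "T' = T(k := T (Suc k) + \<tau>)"
    have same: "(\<Sum>l=Suc k..M. \<sigma> l i * (T' l - T' (Suc l))) = (\<Sum>l=Suc k..M. \<sigma> l i * (T l - T (Suc l)))" for i
      by (rule sum.cong) (auto simp: T'_def)
    have split: "(\<Sum>l=k..M. \<sigma> l i * (T' l - T' (Suc l))) = \<sigma> k i * \<tau> + (\<Sum>l=Suc k..M. \<sigma> l i * (T l - T (Suc l)))" for i
      using sum.atLeast_Suc_atMost[OF kM(2), of "\<lambda>l. \<sigma> l i * (T' l - T' (Suc l))"] same[of i]
      by (simp add: T'_def)
    have Rn: "R n T' i = R k T i - \<sigma> k i * \<tau>" for i
      unfolding R_def using split[of i] k_def by simp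
    show "P n" unfolding P_def
    proof (intro exI[of _ T'] conjI allI impI)
      show "T' (Suc M) = 0" using T(1) kM by (simp add: T'_def)
    next
      fix l assume l: "n < l \<and> l \<le> M"
      show "T' (Suc l) \<le> T' l"
      proof (cases "l = k")
        case True then show ?thesis using tau0 by (simp add: T'_def)
      next
        case False
        hence "k < l" using l k_def by simp
        then show ?thesis using T(2) l by (simp add: T'_def)
      qed
    next
      fix i assume i: "n < i \<and> i \<le> M"
      show "(\<Sum>l=i..M. \<sigma> l i * (T' l - T' (Suc l))) = x i"
      proof (cases "i = k")
        case True
        then show ?thesis using split[of k] stau unfolding R_def by simp
      next
        case False
        hence ki: "k < i" using i k_def by simp
        have "(\<Sum>l=i..M. \<sigma> l i * (T' l - T' (Suc l))) = (\<Sum>l=i..M. \<sigma> l i * (T l - T (Suc l)))"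
          by (rule sum.cong) (use ki in \<open>auto simp: T'_def\<close>)
        then show ?thesis using T(3) ki i by simp
      qed
    next
      fix i assume i: "1 \<le> i \<and> i < n"
      have "R k T (Suc i) \<le> R k T i" using T(4) i k_def by simp
      moreover have "\<sigma> k i \<le> \<sigma> k (Suc i)" using smono kM i k_def by auto
      hence "\<sigma> k i * \<tau> \<le> \<sigma> k (Suc i) * \<tau>" using tau0 by (rule mult_right_mono)
      ultimately show "R n T' (Suc i) \<le> R n T' i" unfolding Rn by simp
    next
      assume n1: "1 \<le> n"
      have "R k T (Suc n) \<le> R k T n" using T(4) n1 k_def by simp
      moreover have "\<sigma> k n \<le> \<sigma> k (Suc n)" using smono kM n1 k_def by auto
      hence "\<sigma> k n * \<tau> \<le> \<sigma> k k * \<tau>" using tau0 k_def by (simp add: mult_right_mono)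
      ultimately show "0 \<le> R n T' n" unfolding Rn using stau k_def by simp
    qed
  qed
  then obtain T where T: "T (Suc M) = 0" "\<forall>l. 0 < l \<and> l \<le> M \<longrightarrow> T (Suc l) \<le> T l"
      "\<forall>i. 0 < i \<and> i \<le> M \<longrightarrow> (\<Sum>l=i..M. \<sigma> l i * (T l - T (Suc l))) = x i"
    unfolding P_def by blast
  have "\<forall>l\<in>{1..M}. T (Suc l) \<le> T l" using T(2) by auto
  moreover have "\<forall>i\<in>{1..M}. (\<Sum>l=i..M. \<sigma> l i * (T l - T (Suc l))) = x i" using T(3) by auto
  ultimately show ?thesis using T(1) by blast
qed

lemma chain_le:
  fixes T :: "nat \<Rightarrow> real"
  assumes mono: "\<forall>l\<in>{1..M}. T (Suc l) \<le> T l" and j: "1 \<le> j" "j \<le> j'" "j' \<le> Suc M"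
  shows "T j' \<le> T j"
  using j(2,3)
proof (induction j' rule: dec_induct)
  case base then show ?case by simp
next
  case (step n)
  hence "T (Suc n) \<le> T n" using mono j(1) by auto
  then show ?case using step by simp
qed

lemma downset:
  assumes S: "S \<subseteq> {1..M}" and dc: "\<forall>j\<in>S. \<forall>j'. 1 \<le> j' \<and> j' \<le> j \<longrightarrow> j' \<in> S"
  shows "S = {1..card S}"
proof (cases "S = {}")
  case True then show ?thesis by simp
next
  case False
  have fS: "finite S" using S finite_subset by blast
  define m where "m = Max S"
  have mS: "m \<in> S" unfolding m_def using Max_in[OF fS False] .
  have "S = {1..m}"
  proof
    show "S \<subseteq> {1..m}" using S Max_ge[OF fS] unfolding m_def by auto
    show "{1..m} \<subseteq> S" using dc mS by auto
  qed
  thus ?thesis by simp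
qed

lemma piece_int:
  fixes f :: "real \<Rightarrow> real"
  assumes "a \<le> b" and fc: "\<And>t. a \<le> t \<Longrightarrow> t < b \<Longrightarrow> f t = c"
  shows "(f has_integral (c * (b - a))) {a..b}"
proof -
  have h: "((\<lambda>t. c) has_integral (c * (b - a))) {a..b}"
    using has_integral_const_real[of c a b] assms(1) by (simp add: mult.commute)
  show ?thesis
  proof (rule has_integral_spike_finite[OF _ _ h])
    show "finite {b}" by simp
    fix t assume "t \<in> {a..b} - {b}"
    thus "f t = c" using fc by auto
  qed
qed

lemma piecewise_int:
  fixes T :: "nat \<Rightarrow> real" and f :: "real \<Rightarrow> real"
  assumes mono: "\<forall>l. i \<le> l \<and> l \<le> N \<longrightarrow> T (Suc l) \<le> T l"
    and fg: "\<forall>l t. i \<le> l \<and> l \<le> N \<and> T (Suc l) \<le> t \<and> t < T l \<longrightarrow> f t = g l"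
    and iN: "i \<le> N"
  shows "(f has_integral (\<Sum>l=i..N. g l * (T l - T (Suc l)))) {T (Suc N)..T i}"
proof -
  have piece: "(f has_integral (g l * (T l - T (Suc l)))) {T (Suc l)..T l}" if l: "i \<le> l" "l \<le> N" for l
    by (rule piece_int) (use mono fg l in auto)
  have main: "i + d \<le> N \<Longrightarrow> (f has_integral (\<Sum>l=i..i+d. g l * (T l - T (Suc l)))) {T (Suc (i+d))..T i} \<and> T (Suc (i + d)) \<le> T i" for d
  proof (induction d)
    case 0
    then show ?case using piece[of i] mono by simp
  next
    case (Suc d)
    hence IH: "(f has_integral (\<Sum>l=i..i+d. g l * (T l - T (Suc l)))) {T (Suc (i+d))..T i}"
      "T (Suc (i + d)) \<le> T i" by auto
    have c1: "T (Suc (Suc (i + d))) \<le> T (Suc (i + d))" using mono Suc.prems by auto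
    have "(f has_integral (g (Suc (i+d)) * (T (Suc (i+d)) - T (Suc (Suc (i+d)))) + (\<Sum>l=i..i+d. g l * (T l - T (Suc l))))) {T (Suc (Suc (i+d)))..T i}"
      by (rule has_integral_combine[OF c1 IH(2) piece[of "Suc (i+d)"] IH(1)]) (use Suc.prems in auto)
    moreover have "(\<Sum>l=i..i + Suc d. g l * (T l - T (Suc l))) = (\<Sum>l=i..i+d. g l * (T l - T (Suc l))) + g (Suc (i+d)) * (T (Suc (i+d)) - T (Suc (Suc (i+d))))"
      by simp
    ultimately show ?case using c1 IH(2) by (simp add: add.commute)
  qed
  show ?thesis using main[of "N - i"] iN by simp
qed



lemma tri_swap:
  fixes F :: "nat \<Rightarrow> nat \<Rightarrow> real"
  shows "(\<Sum>i=1..M. \<Sum>l=i..M. F i l) = (\<Sum>l=1..M. \<Sum>i=1..l. F i l)"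
proof (induction M)
  case 0 then show ?case by simp
next
  case (Suc M)
  have "(\<Sum>i=1..Suc M. \<Sum>l=i..Suc M. F i l) = (\<Sum>i=1..Suc M. (\<Sum>l=i..M. F i l) + F i (Suc M))"
    by (rule sum.cong) auto
  also have "\<dots> = (\<Sum>i=1..Suc M. \<Sum>l=i..M. F i l) + (\<Sum>i=1..Suc M. F i (Suc M))"
    by (simp add: sum.distrib)
  also have "(\<Sum>i=1..Suc M. \<Sum>l=i..M. F i l) = (\<Sum>i=1..M. \<Sum>l=i..M. F i l)" by simp
  finally show ?case using Suc by simp
qed

lemma telescope:
  fixes T :: "nat \<Rightarrow> real"
  assumes "i \<le> Suc M"
  shows "(\<Sum>l=i..M. T l - T (Suc l)) = T i - T (Suc M)"
proof -
  have "(\<Sum>l=i..M. T l - T (Suc l)) = - (\<Sum>l=i..M. T (Suc l) - T l)"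
    by (simp add: sum_negf[symmetric])
  also have "\<dots> = T i - T (Suc M)" using sum_Suc_diff[OF assms, of T] by simp
  finally show ?thesis .
qed

lemma ev_side:
  fixes t c :: real
  shows "eventually (\<lambda>t'. (t' < c) = (t < c)) (at_right t)"
proof (cases "t < c")
  case True
  have "eventually (\<lambda>t'. t' < c) (at_right t)"
    unfolding eventually_at_right_field using True by blast
  then show ?thesis using True by (auto elim: eventually_mono)
next
  case False
  have "eventually (\<lambda>t'. t < t') (at_right t)" by (rule eventually_at_right_less)
  then show ?thesis using False by (auto elim: eventually_mono)
qed

lemma achieve:
  assumes sp: "speedup_fn s B" and B: "0 < B" and inv: "Inv s B w a M"
    and wpos: "\<forall>i\<in>{1..M}. 0 < w i"
    and xpos: "\<forall>i\<in>{1..M}. 0 < x i"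
    and xmono: "\<forall>i\<in>{1..M}. \<forall>j\<in>{1..M}. i \<le> j \<longrightarrow> x j \<le> x i"
  shows "\<exists>\<theta> T. feasible_schedule M B s x \<theta> T \<and> (\<Sum>i=1..M. w i * T i) = (\<Sum>i=1..M. a i * x i)"
proof -
  have a0: "a 0 = 0" and astrict: "\<forall>i j. i < j \<and> j \<le> M \<longrightarrow> a i < a j"
    and lvl: "\<forall>j\<le>M. (\<forall>\<theta>\<in>FS B j. val s a j \<theta> \<le> cw w j) \<and> (\<exists>\<theta>\<in>FS B j. val s a j \<theta> = cw w j)"
    using inv unfolding Inv_def by auto
  have "\<forall>l. \<exists>\<theta>. l \<le> M \<longrightarrow> \<theta> \<in> FS B l \<and> val s a l \<theta> = cw w l" using lvl by blast
  then obtain \<Theta> where Th: "\<And>l. l \<le> M \<Longrightarrow> \<Theta> l \<in> FS B l \<and> val s a l (\<Theta> l) = cw w l"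
    by metis
  have ThF: "\<Theta> l \<in> FS B l" if "l \<le> M" for l using Th[OF that] by blast
  have mx: "\<forall>\<phi>\<in>FS B l. val s a l \<phi> \<le> val s a l (\<Theta> l)" if "l \<le> M" for l
    using Th[OF that] lvl that by auto
  have srt: "\<Theta> l i \<le> \<Theta> l j" if "l \<le> M" "1 \<le> i" "i < j" "j \<le> l" for l i j
  proof (rule max_sorted[OF sp _ ThF[OF that(1)] mx[OF that(1)]])
    show "\<forall>i j. 1 \<le> i \<and> i < j \<and> j \<le> l \<longrightarrow> a i < a j" using astrict that(1) by auto
  qed (use that in auto)
  have bnd: "0 \<le> \<Theta> l k \<and> \<Theta> l k \<le> B" if "l \<le> M" "k \<in> {1..l}" for l k
    using FS_bounds[OF ThF[OF that(1)] that(2)] .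
  have cwpos: "0 < cw w l" if "1 \<le> l" "l \<le> M" for l
    unfolding cw_def using that wpos by (intro sum_pos) auto
  have pos: "0 < \<Theta> l l" if l: "1 \<le> l" "l \<le> M" for l
  proof (rule ccontr)
    assume "\<not> 0 < \<Theta> l l"
    hence z: "\<Theta> l k = 0" if "k \<in> {1..l}" for k
    proof -
      have "\<Theta> l k \<le> \<Theta> l l" using srt[OF l(2), of k l] that by (cases "k = l") auto
      thus ?thesis using bnd[OF l(2) that] \<open>\<not> 0 < \<Theta> l l\<close> by simp
    qed
    have "val s a l (\<Theta> l) = 0" unfolding val_def using z sp_zero[OF sp] by simp
    thus False using Th[OF l(2)] cwpos[OF l] by simp
  qed
  define \<sigma> where "\<sigma> = (\<lambda>l k. s (\<Theta> l k))"
  have smono: "\<forall>l\<in>{1..M}. \<forall>k. 1 \<le> k \<and> k < l \<longrightarrow> \<sigma> l k \<le> \<sigma> l (Suc k)"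
  proof (intro ballI allI impI)
    fix l k assume l: "l \<in> {1..M}" and k: "1 \<le> k \<and> k < l"
    have "\<Theta> l k \<le> \<Theta> l (Suc k)" using srt[of l k "Suc k"] l k by auto
    moreover have "0 \<le> \<Theta> l k" "\<Theta> l (Suc k) \<le> B" using bnd[of l k] bnd[of l "Suc k"] l k by auto
    ultimately show "\<sigma> l k \<le> \<sigma> l (Suc k)" unfolding \<sigma>_def using sp_le[OF sp] by blast
  qed
  have spos: "\<forall>l\<in>{1..M}. 0 < \<sigma> l l"
    unfolding \<sigma>_def using pos bnd sp_pos[OF sp] by auto
  obtain T where T: "T (Suc M) = 0" "\<forall>l\<in>{1..M}. T (Suc l) \<le> T l"
    "\<forall>i\<in>{1..M}. (\<Sum>l=i..M. \<sigma> l i * (T l - T (Suc l))) = x i"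
    using times_exist[OF xpos xmono smono spos] by blast
  have Tle: "T j' \<le> T j" if "1 \<le> j" "j \<le> j'" "j' \<le> Suc M" for j j'
    using chain_le[OF T(2) that] .
  have T0: "0 \<le> T j" if "1 \<le> j" "j \<le> Suc M" for j using Tle[OF that] T(1) by simp
  define St where "St = (\<lambda>t::real. {j\<in>{1..M}. t < T j})"
  define L where "L = (\<lambda>t. card (St t))"
  have St_eq: "St t = {1..L t}" for t
    unfolding L_def
  proof (rule downset[of _ M])
    show "St t \<subseteq> {1..M}" unfolding St_def by auto
    show "\<forall>j\<in>St t. \<forall>j'. 1 \<le> j' \<and> j' \<le> j \<longrightarrow> j' \<in> St t"
    proof (intro ballI allI impI)
      fix j j' assume j: "j \<in> St t" and j': "1 \<le> j' \<and> j' \<le> j"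
      have "T j \<le> T j'" using Tle[of j' j] j j' unfolding St_def by auto
      thus "j' \<in> St t" using j j' unfolding St_def by auto
    qed
  qed
  have LM: "L t \<le> M" for t
  proof -
    have "St t \<subseteq> {1..M}" unfolding St_def by auto
    hence "card (St t) \<le> card {1..M}" by (intro card_mono) auto
    thus ?thesis unfolding L_def by simp
  qed
  have memb: "(t < T i) = (i \<le> L t)" if "i \<in> {1..M}" for i t
  proof -
    have "(t < T i) = (i \<in> St t)" using that unfolding St_def by auto
    also have "\<dots> = (i \<le> L t)" using that St_eq[of t] by auto
    finally show ?thesis .
  qed
  have Lphase: "L t = l" if l: "l \<in> {1..M}" and t: "T (Suc l) \<le> t" "t < T l" for l t
  proof -
    have "St t = {1..l}"
    proof
      show "St t \<subseteq> {1..l}"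
      proof
        fix j assume j: "j \<in> St t"
        show "j \<in> {1..l}"
        proof (rule ccontr)
          assume "j \<notin> {1..l}"
          hence "Suc l \<le> j" "j \<le> M" using j unfolding St_def by auto
          hence "T j \<le> T (Suc l)" using Tle[of "Suc l" j] by auto
          thus False using j t unfolding St_def by auto
        qed
      qed
      show "{1..l} \<subseteq> St t"
      proof
        fix j assume j: "j \<in> {1..l}"
        hence "T l \<le> T j" using Tle[of j l] l by auto
        thus "j \<in> St t" using j l t unfolding St_def by auto
      qed
    qed
    thus ?thesis unfolding L_def by simp
  qed
  define th where "th = (\<lambda>i t. if t < T i then \<Theta> (L t) i else 0)"
  have f1: "\<forall>i\<in>{1..M}. 0 \<le> T i" using T0 by auto
  have f2: "\<forall>i\<in>{1..M}. \<forall>t>0. 0 \<le> th i t \<and> th i t \<le> B"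
  proof (intro ballI allI impI)
    fix i and t :: real assume i: "i \<in> {1..M}" and t: "0 < t"
    show "0 \<le> th i t \<and> th i t \<le> B"
    proof (cases "t < T i")
      case True
      hence "i \<le> L t" using memb[OF i] by simp
      then show ?thesis using bnd[OF LM[of t], of i] True i B unfolding th_def by auto
    next
      case False then show ?thesis using B unfolding th_def by auto
    qed
  qed
  have f3: "\<forall>i\<in>{1..M}. \<forall>t>0. continuous (at_right t) (th i)"
  proof (intro ballI allI impI)
    fix i and t :: real assume i: "i \<in> {1..M}" and t: "0 < t"
    have ev: "eventually (\<lambda>t'. \<forall>j\<in>{1..M}. (t' < T j) = (t < T j)) (at_right t)"
      by (rule eventually_ball_finite) (auto intro: ev_side)
    have "eventually (\<lambda>t'. th i t' = th i t) (at_right t)"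
    proof (rule eventually_mono[OF ev])
      fix t' assume h: "\<forall>j\<in>{1..M}. (t' < T j) = (t < T j)"
      hence "St t' = St t" unfolding St_def by auto
      hence "L t' = L t" unfolding L_def by simp
      thus "th i t' = th i t" using h i unfolding th_def by auto
    qed
    hence "((\<lambda>t'. th i t') \<longlongrightarrow> th i t) (at_right t)" by (rule tendsto_eventually)
    thus "continuous (at_right t) (th i)" unfolding continuous_within by simp
  qed
  have f4: "\<forall>i\<in>{1..M}. (\<lambda>t. s (th i t)) integrable_on {0..T i} \<and> integral {0..T i} (\<lambda>t. s (th i t)) = x i"
  proof
    fix i assume i: "i \<in> {1..M}"
    have hi: "((\<lambda>t. s (th i t)) has_integral (\<Sum>l=i..M. \<sigma> l i * (T l - T (Suc l)))) {T (Suc M)..T i}"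
    proof (rule piecewise_int)
      show "\<forall>l. i \<le> l \<and> l \<le> M \<longrightarrow> T (Suc l) \<le> T l" using T(2) i by auto
      show "i \<le> M" using i by simp
      show "\<forall>l t. i \<le> l \<and> l \<le> M \<and> T (Suc l) \<le> t \<and> t < T l \<longrightarrow> s (th i t) = \<sigma> l i"
      proof (intro allI impI)
        fix l and t :: real assume h: "i \<le> l \<and> l \<le> M \<and> T (Suc l) \<le> t \<and> t < T l"
        have lI: "l \<in> {1..M}" using h i by auto
        have "T l \<le> T i" using Tle[of i l] h i by auto
        hence "t < T i" using h by simp
        thus "s (th i t) = \<sigma> l i" using Lphase[OF lI] h unfolding th_def \<sigma>_def by simp
      qed
    qed
    hence hi': "((\<lambda>t. s (th i t)) has_integral x i) {0..T i}" using T(1) T(3) i by simp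
    show "(\<lambda>t. s (th i t)) integrable_on {0..T i} \<and> integral {0..T i} (\<lambda>t. s (th i t)) = x i"
      using hi' integral_unique by blast
  qed
  have f5: "\<forall>i\<in>{1..M}. \<forall>t>T i. th i t = 0" unfolding th_def by simp
  have f6: "\<forall>t>0. (\<Sum>i\<in>{1..M}. th i t) \<le> B"
  proof (intro allI impI)
    fix t :: real assume t: "0 < t"
    have "(\<Sum>i=1..M. th i t) = (\<Sum>i\<in>{1..L t}. th i t)"
      by (rule sum.mono_neutral_right) (use LM memb in \<open>auto simp: th_def\<close>)
    also have "\<dots> = (\<Sum>i\<in>{1..L t}. \<Theta> (L t) i)"
    proof (rule sum.cong)
      fix i assume i: "i \<in> {1..L t}"
      hence "i \<in> {1..M}" using LM[of t] by auto
      hence "t < T i" using memb i by auto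
      thus "th i t = \<Theta> (L t) i" unfolding th_def by simp
    qed simp
    also have "\<dots> \<le> B" using ThF[OF LM[of t]] unfolding FS_def by auto
    finally show "(\<Sum>i\<in>{1..M}. th i t) \<le> B" .
  qed
  have feas: "feasible_schedule M B s x th T"
    unfolding feasible_schedule_def using f1 f2 f3 f4 f5 f6 by blast
  define \<tau> where "\<tau> = (\<lambda>l. T l - T (Suc l))"
  have "(\<Sum>i=1..M. a i * x i) = (\<Sum>i=1..M. \<Sum>l=i..M. a i * \<sigma> l i * \<tau> l)"
  proof (rule sum.cong)
    fix i assume i: "i \<in> {1..M}"
    have "a i * x i = a i * (\<Sum>l=i..M. \<sigma> l i * \<tau> l)" using T(3) i unfolding \<tau>_def by simp
    also have "\<dots> = (\<Sum>l=i..M. a i * \<sigma> l i * \<tau> l)" by (simp add: sum_distrib_left mult.assoc)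
    finally show "a i * x i = (\<Sum>l=i..M. a i * \<sigma> l i * \<tau> l)" .
  qed simp
  also have "\<dots> = (\<Sum>l=1..M. \<Sum>i=1..l. a i * \<sigma> l i * \<tau> l)" by (rule tri_swap)
  also have "\<dots> = (\<Sum>l=1..M. \<Sum>i=1..l. w i * \<tau> l)"
  proof (rule sum.cong)
    fix l assume l: "l \<in> {1..M}"
    have "(\<Sum>i=1..l. a i * \<sigma> l i * \<tau> l) = val s a l (\<Theta> l) * \<tau> l"
      unfolding val_def \<sigma>_def by (simp add: sum_distrib_right)
    also have "\<dots> = cw w l * \<tau> l" using Th[of l] l by simp
    also have "\<dots> = (\<Sum>i=1..l. w i * \<tau> l)" unfolding cw_def by (simp add: sum_distrib_right)
    finally show "(\<Sum>i=1..l. a i * \<sigma> l i * \<tau> l) = (\<Sum>i=1..l. w i * \<tau> l)" .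
  qed simp
  also have "\<dots> = (\<Sum>i=1..M. \<Sum>l=i..M. w i * \<tau> l)" by (rule tri_swap[symmetric])
  also have "\<dots> = (\<Sum>i=1..M. w i * T i)"
  proof (rule sum.cong)
    fix i assume i: "i \<in> {1..M}"
    have "(\<Sum>l=i..M. w i * \<tau> l) = w i * (\<Sum>l=i..M. \<tau> l)" by (simp add: sum_distrib_left)
    also have "(\<Sum>l=i..M. \<tau> l) = T i" unfolding \<tau>_def using telescope[of i M T] i T(1) by simp
    finally show "(\<Sum>l=i..M. w i * \<tau> l) = w i * T i" .
  qed simp
  finally show ?thesis using feas by metis
qed


theorem proposition9:
  fixes M :: nat and B :: real and s :: "real \<Rightarrow> real" and w :: "nat \<Rightarrow> real"
  assumes B_pos: "B > 0"
    and s_ok: "speedup_fn s B"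
    and w_pos: "\<forall>i\<in>{1..M}. 0 < w i"
    and w_mono: "\<forall>i\<in>{1..M}. \<forall>j\<in>{1..M}. i \<le> j \<longrightarrow> w i \<le> w j"
  shows "\<exists>a :: nat \<Rightarrow> real.
           (\<forall>i\<in>{1..M}. \<forall>j\<in>{1..M}. i < j \<longrightarrow> a i < a j) \<and>
           (\<forall>x :: nat \<Rightarrow> real.
              (\<forall>i\<in>{1..M}. 0 < x i) \<and>
              (\<forall>i\<in>{1..M}. \<forall>j\<in>{1..M}. i \<le> j \<longrightarrow> x j \<le> x i) \<longrightarrow>
              (\<Sum>i\<in>{1..M}. a i * x i) \<in> OPT_values M B s w x \<and>
              (\<forall>J\<in>OPT_values M B s w x. (\<Sum>i\<in>{1..M}. a i * x i) \<le> J))"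
proof -
  obtain a where inv: "Inv s B w a M" using construct_a[OF s_ok B_pos w_pos w_mono] by blast
  have strict: "\<forall>i\<in>{1..M}. \<forall>j\<in>{1..M}. i < j \<longrightarrow> a i < a j"
    using inv unfolding Inv_def by auto
  have main: "(\<Sum>i\<in>{1..M}. a i * x i) \<in> OPT_values M B s w x \<and>
              (\<forall>J\<in>OPT_values M B s w x. (\<Sum>i\<in>{1..M}. a i * x i) \<le> J)"
    if xpos: "\<forall>i\<in>{1..M}. 0 < x i" and xmono: "\<forall>i\<in>{1..M}. \<forall>j\<in>{1..M}. i \<le> j \<longrightarrow> x j \<le> x i"
    for x :: "nat \<Rightarrow> real"
  proof
    obtain th T where fs: "feasible_schedule M B s x th T"
      and eq: "(\<Sum>i=1..M. w i * T i) = (\<Sum>i=1..M. a i * x i)"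
      using achieve[OF s_ok B_pos inv w_pos xpos xmono] by blast
    show "(\<Sum>i\<in>{1..M}. a i * x i) \<in> OPT_values M B s w x"
      unfolding OPT_values_def using fs eq by (metis (mono_tags, lifting) mem_Collect_eq)
    show "\<forall>J\<in>OPT_values M B s w x. (\<Sum>i\<in>{1..M}. a i * x i) \<le> J"
    proof
      fix J assume "J \<in> OPT_values M B s w x"
      then obtain th' T' where J: "J = (\<Sum>i\<in>{1..M}. w i * T' i)" and fs': "feasible_schedule M B s x th' T'"
        unfolding OPT_values_def by blast
      show "(\<Sum>i\<in>{1..M}. a i * x i) \<le> J"
        using lower_bound[OF s_ok B_pos inv w_pos w_mono xpos xmono fs'] J by simp
    qed
  qed
  show ?thesis using strict main by blast
qed

end
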